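(* Let $(X_n)_{n\ge0}$ be a Galton–Watson process with $X_0=1$ and $X_n=\sum_{k=1}^{X_{n-1}}Y_{n,k}$, where $(Y_{n,k})$ are i.i.d. nonnegative integer-valued random variables with finite mean $m>1$ and finite variance, and assume the process a.s. never becomes extinct (i.e. $\mathbb{P}(X_n=0\text{ for some }n)=0$). Let $L(t)=\log\mathbb{E}[\exp(t(Y_{n,k}-m))]$ and assume $L$ is finite on $[-c,c]$ for some $c>0$; let $I(x)=\sup_{-c\le t\le c}\{xt-L(t)\}$ and $J(x)=\min(I(x),I(-x))$. Define $\tilde m_n=X_n/X_{n-1}$, $\hat m_n=\frac{\sum_{k=1}^nX_k}{\sum_{k=1}^nX_{k-1}}$, and $S_n=\sum_{k=0}^nX_k$. Then for all $n\ge1$ and $x>0$, $$\mathbb{P}(|\tilde m_n-m|\ge x)\le2\,\mathbb{E}[\exp(-J(x)X_{n-1})],$$ $$\mathbb{P}(|\tilde m_n-m|\ge x)\le2\inf_{p>1}\big(\mathbb{E}[\exp(-(p-1)J(x)X_{n-1})]\big)^{1/p},$$ $$\mathbb{P}(|\hat m_n-m|\ge x)\le2\inf_{p>1}\big(\mathbb{E}[\exp(-(p-1)J(x)S_{n-1})]\big)^{1/p}.$$ *)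

theory Defs
  imports "HOL-Probability.Probability"
begin

fun gw_X :: "(nat \<Rightarrow> nat \<Rightarrow> 'a \<Rightarrow> nat) \<Rightarrow> nat \<Rightarrow> 'a \<Rightarrow> nat" where
  "gw_X Y 0 \<omega> = 1"
| "gw_X Y (Suc n) \<omega> = (\<Sum>k = 1..gw_X Y n \<omega>. Y (Suc n) k \<omega>)"

text \<open>Centered log-moment generating function of the offspring law (Y 1 1 has the common law).\<close>
definition gw_L :: "'a measure \<Rightarrow> (nat \<Rightarrow> nat \<Rightarrow> 'a \<Rightarrow> nat) \<Rightarrow> real \<Rightarrow> real \<Rightarrow> real" where
  "gw_L M Y m t = ln (integral\<^sup>L M (\<lambda>\<omega>. exp (t * (real (Y 1 1 \<omega>) - m))))"

definition gw_I :: "'a measure \<Rightarrow> (nat \<Rightarrow> nat \<Rightarrow> 'a \<Rightarrow> nat) \<Rightarrow> real \<Rightarrow> real \<Rightarrow> real \<Rightarrow> real" where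
  "gw_I M Y m c x = (SUP t\<in>{-c..c}. x * t - gw_L M Y m t)"

definition gw_J :: "'a measure \<Rightarrow> (nat \<Rightarrow> nat \<Rightarrow> 'a \<Rightarrow> nat) \<Rightarrow> real \<Rightarrow> real \<Rightarrow> real \<Rightarrow> real" where
  "gw_J M Y m c x = min (gw_I M Y m c x) (gw_I M Y m c (- x))"

end

theory Submission
  imports Defs
begin

lemma gw_X_cong:
  assumes "\<And>i k. 1 \<le> i \<Longrightarrow> i \<le> r \<Longrightarrow> 1 \<le> k \<Longrightarrow> Y i k \<omega> = Y' i k \<omega>'"
  shows "gw_X Y r \<omega> = gw_X Y' r \<omega>'"
  using assms
proof (induction r)
  case 0 then show ?case by simp
next
  case (Suc r)
  then have "gw_X Y r \<omega> = gw_X Y' r \<omega>'" by simp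
  moreover have "\<And>k. 1 \<le> k \<Longrightarrow> Y (Suc r) k \<omega> = Y' (Suc r) k \<omega>'" using Suc.prems by simp
  ultimately show ?case by (auto intro: sum.cong)
qed

lemma gw_X_meas:
  assumes "\<And>i k. 1 \<le> i \<Longrightarrow> i \<le> r \<Longrightarrow> 1 \<le> k \<Longrightarrow> Y i k \<in> measurable N (count_space UNIV)"
  shows "gw_X Y r \<in> measurable N (count_space UNIV)"
  using assms
proof (induction r)
  case 0 then show ?case by simp
next
  case (Suc r)
  have g: "gw_X Y r \<in> measurable N (count_space UNIV)" using Suc by simp
  have f: "(\<lambda>\<omega>. \<Sum>k = 1..j. Y (Suc r) k \<omega>) \<in> measurable N (count_space UNIV)" for j
  proof -
    have "\<And>k. k \<in> {1..j} \<Longrightarrow> (\<lambda>\<omega>. real (Y (Suc r) k \<omega>)) \<in> borel_measurable N"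
      using Suc.prems by (auto intro: measurable_compose[OF _ measurable_count_space])
    hence "(\<lambda>\<omega>. \<Sum>k = 1..j. real (Y (Suc r) k \<omega>)) \<in> borel_measurable N" by auto
    hence "(\<lambda>\<omega>. nat \<lfloor>\<Sum>k = 1..j. real (Y (Suc r) k \<omega>)\<rfloor>) \<in> measurable N (count_space UNIV)"
      by measurable
    thus ?thesis by (simp flip: of_nat_sum)
  qed
  have "(\<lambda>\<omega>. (\<lambda>j \<omega>. \<Sum>k = 1..j. Y (Suc r) k \<omega>) (gw_X Y r \<omega>) \<omega>) \<in> measurable N (count_space UNIV)"
    by (rule measurable_compose_countable'[OF f g]) auto
  thus ?case by simp
qed

definition blk :: "nat \<Rightarrow> (nat \<times> nat) set" where
  "blk n = {(i, k). 1 \<le> i \<and> i < n \<and> 1 \<le> k}"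
definition Wv :: "(nat \<Rightarrow> nat \<Rightarrow> 'a \<Rightarrow> nat) \<Rightarrow> nat \<Rightarrow> 'a \<Rightarrow> (nat \<times> nat \<Rightarrow> nat)" where
  "Wv Y n \<omega> = restrict (\<lambda>p. case_prod Y p \<omega>) (blk n)"
definition Yh :: "nat \<Rightarrow> nat \<Rightarrow> (nat \<times> nat \<Rightarrow> nat) \<Rightarrow> nat" where
  "Yh i k w = w (i, k)"

lemma W_cong: "r < n \<Longrightarrow> gw_X Y r \<omega> = gw_X Yh r (Wv Y n \<omega>)"
  by (rule gw_X_cong) (auto simp: Yh_def Wv_def blk_def)

lemma Yh_meas: "r < n \<Longrightarrow> gw_X Yh r \<in> measurable (PiM (blk n) (\<lambda>_. count_space UNIV)) (count_space UNIV)"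
proof (rule gw_X_meas)
  fix i k :: nat assume "r < n" "1 \<le> i" "i \<le> r" "1 \<le> k"
  hence "(i, k) \<in> blk n" by (auto simp: blk_def)
  hence "(\<lambda>w. w (i, k)) \<in> measurable (PiM (blk n) (\<lambda>_. count_space UNIV)) (count_space UNIV)"
    by (rule measurable_component_singleton)
  thus "Yh i k \<in> measurable (PiM (blk n) (\<lambda>_. count_space UNIV)) (count_space UNIV)"
    by (simp add: Yh_def[abs_def])
qed

locale gw = prob_space M for M :: "'a measure" +
  fixes Y :: "nat \<Rightarrow> nat \<Rightarrow> 'a \<Rightarrow> nat" and m c :: real
  assumes indep: "indep_vars (\<lambda>_. count_space UNIV) (\<lambda>(i, k). Y i k) {(i, k). 1 \<le> i \<and> 1 \<le> k}"
    and ident: "\<And>i k. 1 \<le> i \<Longrightarrow> 1 \<le> k \<Longrightarrow>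
                  distr M (count_space UNIV) (Y i k) = distr M (count_space UNIV) (Y 1 1)"
    and mean_int: "integrable M (\<lambda>\<omega>. real (Y 1 1 \<omega>))"
    and m_def: "m = integral\<^sup>L M (\<lambda>\<omega>. real (Y 1 1 \<omega>))"
    and c_pos: "c > 0"
    and mgf_fin: "\<And>t. t \<in> {-c..c} \<Longrightarrow> integrable M (\<lambda>\<omega>. exp (t * (real (Y 1 1 \<omega>) - m)))"
begin

abbreviation "L \<equiv> gw_L M Y m"

lemma Ymeas: "1 \<le> i \<Longrightarrow> 1 \<le> k \<Longrightarrow> Y i k \<in> measurable M (count_space UNIV)"
  using indep unfolding indep_vars_def by auto

lemma Xmeas[measurable]: "gw_X Y r \<in> measurable M (count_space UNIV)"
  by (rule gw_X_meas) (auto intro: Ymeas)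

lemma Wmeas[measurable]: "Wv Y n \<in> measurable M (PiM (blk n) (\<lambda>_. count_space UNIV))"
  unfolding Wv_def by (rule measurable_restrict) (auto simp: blk_def intro: Ymeas)

lemma mgf_ge1: assumes "t \<in> {-c..c}"
  shows "integral\<^sup>L M (\<lambda>\<omega>. exp (t * (real (Y 1 1 \<omega>) - m))) \<ge> 1"
proof -
  have i: "integrable M (\<lambda>\<omega>. 1 + t * (real (Y 1 1 \<omega>) - m))"
    using mean_int by auto
  have "integral\<^sup>L M (\<lambda>\<omega>. 1 + t * (real (Y 1 1 \<omega>) - m)) = 1"
    using mean_int by (simp add: m_def prob_space)
  moreover have "integral\<^sup>L M (\<lambda>\<omega>. 1 + t * (real (Y 1 1 \<omega>) - m))
      \<le> integral\<^sup>L M (\<lambda>\<omega>. exp (t * (real (Y 1 1 \<omega>) - m)))"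
    by (rule integral_mono[OF i mgf_fin[OF assms]]) (rule exp_ge_add_one_self)
  ultimately show ?thesis by simp
qed

lemma expL: "t \<in> {-c..c} \<Longrightarrow> exp (L t) = integral\<^sup>L M (\<lambda>\<omega>. exp (t * (real (Y 1 1 \<omega>) - m)))"
  using mgf_ge1[of t] by (simp add: gw_L_def)

lemma L_nonneg: "t \<in> {-c..c} \<Longrightarrow> L t \<ge> 0"
  using mgf_ge1[of t] by (simp add: gw_L_def)

lemma L0: "L 0 = 0"
  by (simp add: gw_L_def prob_space)

lemma nn_mgf: assumes "t \<in> {-c..c}" "1 \<le> i" "1 \<le> k"
  shows "(\<integral>\<^sup>+\<omega>. ennreal (exp (t * (real (Y i k \<omega>) - m))) \<partial>M) = ennreal (exp (L t))"
proof -
  have "(\<integral>\<^sup>+\<omega>. ennreal (exp (t * (real (Y i k \<omega>) - m))) \<partial>M)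
      = (\<integral>\<^sup>+z. ennreal (exp (t * (real z - m))) \<partial>distr M (count_space UNIV) (Y i k))"
    using Ymeas[OF assms(2,3)] by (simp add: nn_integral_distr)
  also have "\<dots> = (\<integral>\<^sup>+z. ennreal (exp (t * (real z - m))) \<partial>distr M (count_space UNIV) (Y 1 1))"
    using ident[OF assms(2,3)] by simp
  also have "\<dots> = (\<integral>\<^sup>+\<omega>. ennreal (exp (t * (real (Y 1 1 \<omega>) - m))) \<partial>M)"
    using Ymeas[of 1 1] by (simp add: nn_integral_distr)
  also have "\<dots> = ennreal (integral\<^sup>L M (\<lambda>\<omega>. exp (t * (real (Y 1 1 \<omega>) - m))))"
    by (rule nn_integral_eq_integral[OF mgf_fin[OF assms(1)]]) auto
  finally show ?thesis using expL[OF assms(1)] by simp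
qed


lemma core:
  assumes n: "1 \<le> n" and t: "t \<in> {-c..c}"
    and F[measurable]: "F \<in> borel_measurable (PiM (blk n) (\<lambda>_. count_space UNIV))"
  shows "(\<integral>\<^sup>+\<omega>. F (Wv Y n \<omega>) * ennreal (exp (t * (real (gw_X Y n \<omega>) - m * real (gw_X Y (n-1) \<omega>)))) \<partial>M)
       = (\<integral>\<^sup>+\<omega>. F (Wv Y n \<omega>) * ennreal (exp (L t * real (gw_X Y (n-1) \<omega>))) \<partial>M)"
proof -
  define N where "N \<omega> = gw_X Y (n-1) \<omega>" for \<omega>
  define h where "h = gw_X Yh (n-1)"
  have Nh: "N \<omega> = h (Wv Y n \<omega>)" for \<omega> using W_cong[of "n-1" n] n by (simp add: N_def h_def)
  have hm[measurable]: "h \<in> measurable (PiM (blk n) (\<lambda>_. count_space UNIV)) (count_space UNIV)"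
    using Yh_meas n by (simp add: h_def)
  have Nm[measurable]: "N \<in> measurable M (count_space UNIV)" unfolding N_def by measurable
  have Xn: "gw_X Y n \<omega> = (\<Sum>k=1..N \<omega>. Y n k \<omega>)" for \<omega>
    using n by (cases n) (auto simp: N_def)
  define G1 where "G1 \<omega> = F (Wv Y n \<omega>) * ennreal (exp (t * (real (gw_X Y n \<omega>) - m * real (N \<omega>))))" for \<omega>
  define G2 where "G2 \<omega> = F (Wv Y n \<omega>) * ennreal (exp (L t * real (N \<omega>)))" for \<omega>
  have G1m[measurable]: "G1 \<in> borel_measurable M" unfolding G1_def N_def by measurable
  have G2m[measurable]: "G2 \<in> borel_measurable M" unfolding G2_def N_def by measurable
  have step: "(\<integral>\<^sup>+\<omega>. (if j = N \<omega> then G1 \<omega> else 0) \<partial>M)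
     = (\<integral>\<^sup>+\<omega>. (if j = N \<omega> then G2 \<omega> else 0) \<partial>M)" for j
  proof -
    define K where "K b = (if b = 0 then blk n else {(n, b)})" for b
    define \<Phi> where "\<Phi> b w = (if b = 0 then (if h w = j then F w else 0)
       else ennreal (exp (t * (real (w (n, b)) - m))))" for b and w :: "nat \<times> nat \<Rightarrow> nat"
    have ind1: "indep_vars (\<lambda>b. PiM (K b) (\<lambda>_. count_space UNIV))
        (\<lambda>b \<omega>. restrict (\<lambda>p. case_prod Y p \<omega>) (K b)) {0..j}"
      by (rule indep_vars_restrict[OF indep]) (use n in \<open>auto simp: K_def blk_def disjoint_family_on_def\<close>)
    have ind2: "indep_vars (\<lambda>_. borel) (\<lambda>b \<omega>. \<Phi> b (restrict (\<lambda>p. case_prod Y p \<omega>) (K b))) {0..j}"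
    proof (rule indep_vars_compose2[OF ind1])
      fix b assume "b \<in> {0..j}"
      show "\<Phi> b \<in> borel_measurable (PiM (K b) (\<lambda>_. count_space UNIV))"
      proof (cases "b = 0")
        case True
        have "\<Phi> 0 = (\<lambda>w. if h w = j then F w else 0)" by (simp add: \<Phi>_def[abs_def])
        moreover have "(\<lambda>w. if h w = j then F w else 0) \<in> borel_measurable (PiM (blk n) (\<lambda>_. count_space UNIV))"
          by measurable
        ultimately show ?thesis using True by (simp add: K_def)
      next
        case False
        have "(n, b) \<in> K b" using False by (simp add: K_def)
        hence c1: "(\<lambda>w. w (n, b)) \<in> measurable (PiM (K b) (\<lambda>_. count_space UNIV)) (count_space UNIV)"
          by (rule measurable_component_singleton)
        have "(\<lambda>w. ennreal (exp (t * (real (w (n, b)) - m)))) \<in> borel_measurable (PiM (K b) (\<lambda>_. count_space UNIV))"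
          by (rule measurable_compose[OF c1]) simp
        then show ?thesis using False by (simp add: \<Phi>_def[abs_def])
      qed
    qed
    have eq3: "(\<integral>\<^sup>+\<omega>. (\<Prod>b\<in>{0..j}. \<Phi> b (restrict (\<lambda>p. case_prod Y p \<omega>) (K b))) \<partial>M)
        = (\<Prod>b\<in>{0..j}. \<integral>\<^sup>+\<omega>. \<Phi> b (restrict (\<lambda>p. case_prod Y p \<omega>) (K b)) \<partial>M)"
      by (rule indep_vars_nn_integral[OF _ ind2]) auto
    have pw0: "\<Phi> 0 (restrict (\<lambda>p. case_prod Y p \<omega>) (K 0)) = (if j = N \<omega> then F (Wv Y n \<omega>) else 0)" for \<omega>
      by (auto simp: K_def Wv_def Nh \<Phi>_def)
    have pwb: "b \<noteq> 0 \<Longrightarrow> \<Phi> b (restrict (\<lambda>p. case_prod Y p \<omega>) (K b)) = ennreal (exp (t * (real (Y n b \<omega>) - m)))" for b \<omega>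
      by (simp add: \<Phi>_def K_def)
    have split: "{0..j} = insert 0 {1..j}" by auto
    have prodeq: "(\<Prod>b\<in>{0..j}. \<Phi> b (restrict (\<lambda>p. case_prod Y p \<omega>) (K b)))
        = (if j = N \<omega> then F (Wv Y n \<omega>) else 0) * (\<Prod>b\<in>{1..j}. ennreal (exp (t * (real (Y n b \<omega>) - m))))" for \<omega>
      unfolding split by (subst prod.insert) (auto simp: pw0 pwb)
    have lhs: "(if j = N \<omega> then G1 \<omega> else 0)
        = (if j = N \<omega> then F (Wv Y n \<omega>) else 0) * (\<Prod>b\<in>{1..j}. ennreal (exp (t * (real (Y n b \<omega>) - m))))" for \<omega>
    proof (cases "j = N \<omega>")
      case True
      have "t * (real (gw_X Y n \<omega>) - m * real (N \<omega>)) = (\<Sum>b\<in>{1..j}. t * (real (Y n b \<omega>) - m))"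
        by (simp add: Xn True sum_subtractf sum_distrib_left algebra_simps)
      hence "exp (t * (real (gw_X Y n \<omega>) - m * real (N \<omega>))) = (\<Prod>b\<in>{1..j}. exp (t * (real (Y n b \<omega>) - m)))"
        by (simp add: exp_sum)
      then show ?thesis using True by (simp add: G1_def prod_ennreal)
    qed simp
    have int_b: "(\<integral>\<^sup>+\<omega>. \<Phi> b (restrict (\<lambda>p. case_prod Y p \<omega>) (K b)) \<partial>M) = ennreal (exp (L t))"
      if "b \<in> {1..j}" for b
      using that n by (simp add: pwb nn_mgf[OF t])
    have "(\<integral>\<^sup>+\<omega>. (if j = N \<omega> then G1 \<omega> else 0) \<partial>M)
        = (\<Prod>b\<in>{0..j}. \<integral>\<^sup>+\<omega>. \<Phi> b (restrict (\<lambda>p. case_prod Y p \<omega>) (K b)) \<partial>M)"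
      unfolding lhs prodeq[symmetric] eq3 ..
    also have "\<dots> = (\<integral>\<^sup>+\<omega>. (if j = N \<omega> then F (Wv Y n \<omega>) else 0) \<partial>M) * ennreal (exp (L t)) ^ j"
      unfolding split by (subst prod.insert) (auto simp: pw0 int_b)
    also have "\<dots> = (\<integral>\<^sup>+\<omega>. (if j = N \<omega> then F (Wv Y n \<omega>) else 0) * ennreal (exp (L t * real j)) \<partial>M)"
      by (subst nn_integral_multc) (auto simp: ennreal_power exp_of_nat_mult[symmetric] mult.commute)
    also have "\<dots> = (\<integral>\<^sup>+\<omega>. (if j = N \<omega> then G2 \<omega> else 0) \<partial>M)"
      by (rule nn_integral_cong) (simp add: G2_def)
    finally show ?thesis .
  qed
  have sum1: "G \<omega> = (\<Sum>j. if j = N \<omega> then G \<omega> else 0)" for G :: "'a \<Rightarrow> ennreal" and \<omega>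
    using sums_single[of "N \<omega>" "\<lambda>_. G \<omega>"] by (simp add: sums_iff)
  have "(\<integral>\<^sup>+\<omega>. G1 \<omega> \<partial>M) = (\<integral>\<^sup>+\<omega>. (\<Sum>j. if j = N \<omega> then G1 \<omega> else 0) \<partial>M)"
    by (subst sum1) rule
  also have "\<dots> = (\<Sum>j. \<integral>\<^sup>+\<omega>. (if j = N \<omega> then G1 \<omega> else 0) \<partial>M)"
    by (rule nn_integral_suminf) measurable
  also have "\<dots> = (\<Sum>j. \<integral>\<^sup>+\<omega>. (if j = N \<omega> then G2 \<omega> else 0) \<partial>M)"
    by (simp add: step)
  also have "\<dots> = (\<integral>\<^sup>+\<omega>. (\<Sum>j. if j = N \<omega> then G2 \<omega> else 0) \<partial>M)"
    by (rule nn_integral_suminf[symmetric]) measurable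
  also have "\<dots> = (\<integral>\<^sup>+\<omega>. G2 \<omega> \<partial>M)"
    by (subst sum1[of G2]) rule
  finally show ?thesis by (simp add: G1_def G2_def N_def)
qed


lemma Xr_meas_h: "k < n \<Longrightarrow> (\<lambda>w. real (gw_X Yh k w)) \<in> borel_measurable (PiM (blk n) (\<lambda>_. count_space UNIV))"
  by (rule measurable_compose[OF Yh_meas]) auto

lemma consA:
  assumes n: "1 \<le> n" and t: "t \<in> {-c..c}"
  shows "(\<integral>\<^sup>+\<omega>. ennreal (exp (t * (real (gw_X Y n \<omega>) - m * real (gw_X Y (n-1) \<omega>)) - l * real (gw_X Y (n-1) \<omega>))) \<partial>M)
       = (\<integral>\<^sup>+\<omega>. ennreal (exp ((L t - l) * real (gw_X Y (n-1) \<omega>))) \<partial>M)"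
proof -
  define F where "F w = ennreal (exp (- l * real (gw_X Yh (n-1) w)))" for w
  have Fm: "F \<in> borel_measurable (PiM (blk n) (\<lambda>_. count_space UNIV))"
    unfolding F_def[abs_def] using Xr_meas_h[of "n-1" n] n by (simp add: measurable_compose[OF _ borel_measurable_exp])
  have FW: "F (Wv Y n \<omega>) = ennreal (exp (- l * real (gw_X Y (n-1) \<omega>)))" for \<omega>
    using W_cong[of "n-1" n Y \<omega>] n by (simp add: F_def)
  have "(\<integral>\<^sup>+\<omega>. ennreal (exp (t * (real (gw_X Y n \<omega>) - m * real (gw_X Y (n-1) \<omega>)) - l * real (gw_X Y (n-1) \<omega>))) \<partial>M)
     = (\<integral>\<^sup>+\<omega>. F (Wv Y n \<omega>) * ennreal (exp (t * (real (gw_X Y n \<omega>) - m * real (gw_X Y (n-1) \<omega>)))) \<partial>M)"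
    by (rule nn_integral_cong) (simp add: FW ennreal_mult[symmetric] exp_add[symmetric] algebra_simps)
  also have "\<dots> = (\<integral>\<^sup>+\<omega>. F (Wv Y n \<omega>) * ennreal (exp (L t * real (gw_X Y (n-1) \<omega>))) \<partial>M)"
    by (rule core[OF n t Fm])
  also have "\<dots> = (\<integral>\<^sup>+\<omega>. ennreal (exp ((L t - l) * real (gw_X Y (n-1) \<omega>))) \<partial>M)"
    by (rule nn_integral_cong) (simp add: FW ennreal_mult[symmetric] exp_add[symmetric] algebra_simps)
  finally show ?thesis .
qed

definition Zf :: "real \<Rightarrow> real \<Rightarrow> (nat \<Rightarrow> nat \<Rightarrow> 'b \<Rightarrow> nat) \<Rightarrow> nat \<Rightarrow> 'b \<Rightarrow> real" where
  "Zf t l Y' r \<omega> = exp (t * (\<Sum>k=1..r. real (gw_X Y' k \<omega>) - m * real (gw_X Y' (k-1) \<omega>))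
       - l * (\<Sum>k=1..r. real (gw_X Y' (k-1) \<omega>)))"

lemma Zf_cong: "r < n \<Longrightarrow> Zf t l Y r \<omega> = Zf t l Yh r (Wv Y n \<omega>)"
  unfolding Zf_def
  by (intro arg_cong[where f=exp] arg_cong2[where f="(-)"] arg_cong2[where f="(*)"] refl sum.cong)
     (auto intro!: W_cong)

lemma Zf_meas: "r < n \<Longrightarrow> Zf t l Yh r \<in> borel_measurable (PiM (blk n) (\<lambda>_. count_space UNIV))"
proof -
  assume rn: "r < n"
  have [measurable]: "\<And>k. k \<in> {1..r} \<Longrightarrow> (\<lambda>w. real (gw_X Yh k w)) \<in> borel_measurable (PiM (blk n) (\<lambda>_. count_space UNIV))"
    using rn by (auto intro!: Xr_meas_h)
  have [measurable]: "\<And>k. k \<in> {1..r} \<Longrightarrow> (\<lambda>w. real (gw_X Yh (k-1) w)) \<in> borel_measurable (PiM (blk n) (\<lambda>_. count_space UNIV))"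
    using rn by (auto intro!: Xr_meas_h)
  show ?thesis unfolding Zf_def[abs_def] by measurable
qed

lemma Zf_one: assumes t: "t \<in> {-c..c}"
  shows "(\<integral>\<^sup>+\<omega>. ennreal (Zf t (L t) Y r \<omega>) \<partial>M) = 1"
proof (induction r)
  case 0
  then show ?case by (simp add: Zf_def emeasure_space_1)
next
  case (Suc r)
  define F where "F w = ennreal (Zf t (L t) Yh r w * exp (- L t * real (gw_X Yh r w)))" for w
  have Fm: "F \<in> borel_measurable (PiM (blk (Suc r)) (\<lambda>_. count_space UNIV))"
    unfolding F_def[abs_def] using Xr_meas_h[of r "Suc r"] Zf_meas[of r "Suc r"] by measurable
  have FW: "F (Wv Y (Suc r) \<omega>) = ennreal (Zf t (L t) Y r \<omega> * exp (- L t * real (gw_X Y r \<omega>)))" for \<omega>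
    using W_cong[of r "Suc r" Y \<omega>] Zf_cong[of r "Suc r" t "L t" \<omega>] by (simp add: F_def)
  have ZS: "Zf t (L t) Y (Suc r) \<omega> = Zf t (L t) Y r \<omega> * exp (- L t * real (gw_X Y r \<omega>))
      * exp (t * (real (gw_X Y (Suc r) \<omega>) - m * real (gw_X Y r \<omega>)))" for \<omega>
  proof -
    have "Zf t (L t) Y (Suc r) \<omega> = exp ((t * (\<Sum>k=1..r. real (gw_X Y k \<omega>) - m * real (gw_X Y (k-1) \<omega>))
       - L t * (\<Sum>k=1..r. real (gw_X Y (k-1) \<omega>))) + (- L t * real (gw_X Y r \<omega>))
       + (t * (real (gw_X Y (Suc r) \<omega>) - m * real (gw_X Y r \<omega>))))"
      unfolding Zf_def by (simp add: algebra_simps del: gw_X.simps)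
    thus ?thesis unfolding exp_add Zf_def .
  qed
  have "(\<integral>\<^sup>+\<omega>. ennreal (Zf t (L t) Y (Suc r) \<omega>) \<partial>M)
      = (\<integral>\<^sup>+\<omega>. F (Wv Y (Suc r) \<omega>) * ennreal (exp (t * (real (gw_X Y (Suc r) \<omega>) - m * real (gw_X Y (Suc r - 1) \<omega>)))) \<partial>M)"
    by (rule nn_integral_cong) (simp add: FW ZS ennreal_mult''[symmetric] del: gw_X.simps)
  also have "\<dots> = (\<integral>\<^sup>+\<omega>. F (Wv Y (Suc r) \<omega>) * ennreal (exp (L t * real (gw_X Y (Suc r - 1) \<omega>))) \<partial>M)"
    by (rule core[OF _ t Fm]) simp
  also have "\<dots> = (\<integral>\<^sup>+\<omega>. ennreal (Zf t (L t) Y r \<omega>) \<partial>M)"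
    by (rule nn_integral_cong) (simp add: FW ennreal_mult''[symmetric] mult.assoc exp_add[symmetric] del: gw_X.simps)
  finally show ?case using Suc by simp
qed

end


lemma (in prob_space) exp_int_pos:
  fixes R :: "'a \<Rightarrow> real"
  assumes [measurable]: "R \<in> borel_measurable M" and R0: "\<And>\<omega>. R \<omega> \<ge> 0" and w: "w \<ge> 0"
  shows "integrable M (\<lambda>\<omega>. exp (- w * R \<omega>))" and "integral\<^sup>L M (\<lambda>\<omega>. exp (- w * R \<omega>)) > 0"
    and "integral\<^sup>L M (\<lambda>\<omega>. exp (- w * R \<omega>)) \<le> 1"
    and "(\<integral>\<^sup>+\<omega>. ennreal (exp (- w * R \<omega>)) \<partial>M) = ennreal (integral\<^sup>L M (\<lambda>\<omega>. exp (- w * R \<omega>)))"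
proof -
  have b: "exp (- w * R \<omega>) \<le> 1" for \<omega> using R0[of \<omega>] w by (simp add: mult_nonneg_nonneg)
  show i: "integrable M (\<lambda>\<omega>. exp (- w * R \<omega>))"
    by (rule integrable_const_bound[where B=1]) (auto simp: b intro!: AE_I2 mult_nonneg_nonneg w R0)
  have "integral\<^sup>L M (\<lambda>\<omega>. exp (- w * R \<omega>)) \<noteq> 0"
    using integral_nonneg_eq_0_iff_AE[OF i] by (simp add: AE_False)
  moreover have "integral\<^sup>L M (\<lambda>\<omega>. exp (- w * R \<omega>)) \<ge> 0" by (rule integral_nonneg_AE) simp
  ultimately show "integral\<^sup>L M (\<lambda>\<omega>. exp (- w * R \<omega>)) > 0" by linarith
  have "integral\<^sup>L M (\<lambda>\<omega>. exp (- w * R \<omega>)) \<le> integral\<^sup>L M (\<lambda>\<omega>. 1)"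
    by (rule integral_mono[OF i]) (auto simp: b w R0)
  thus "integral\<^sup>L M (\<lambda>\<omega>. exp (- w * R \<omega>)) \<le> 1" by (simp add: prob_space)
  show "(\<integral>\<^sup>+\<omega>. ennreal (exp (- w * R \<omega>)) \<partial>M) = ennreal (integral\<^sup>L M (\<lambda>\<omega>. exp (- w * R \<omega>)))"
    by (rule nn_integral_eq_integral[OF i]) auto
qed

lemma tail_pos:
  fixes t a D R :: real
  assumes "a \<noteq> 0" "t * a \<ge> 0" "0 \<le> a * (D - a * R)"
  shows "t * (D - a * R) \<ge> 0"
proof -
  have "t * (D - a * R) = (t * a) * (a * (D - a * R)) / a ^ 2"
    using assms(1) by (simp add: power2_eq_square field_simps)
  also have "\<dots> \<ge> 0" using assms by simp
  finally show ?thesis .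
qed

lemma (in prob_space) markov_tail:
  fixes D R :: "'a \<Rightarrow> real"
  assumes [measurable]: "D \<in> borel_measurable M" "R \<in> borel_measurable M"
    and R0: "\<And>\<omega>. R \<omega> \<ge> 0" and a: "a \<noteq> 0" and ta: "t * a \<ge> 0" and v: "v \<ge> 0"
    and H: "(\<integral>\<^sup>+\<omega>. ennreal (exp (t * D \<omega> - t * a * R \<omega>)) \<partial>M) = (\<integral>\<^sup>+\<omega>. ennreal (exp (- v * R \<omega>)) \<partial>M)"
  shows "measure M {\<omega>\<in>space M. 0 \<le> a * (D \<omega> - a * R \<omega>)} \<le> integral\<^sup>L M (\<lambda>\<omega>. exp (- v * R \<omega>))"
proof -
  let ?A = "{\<omega>\<in>space M. 0 \<le> a * (D \<omega> - a * R \<omega>)}"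
  have As: "?A \<in> sets M" by measurable
  have "emeasure M ?A = (\<integral>\<^sup>+\<omega>. indicator ?A \<omega> \<partial>M)" using As by simp
  also have "\<dots> \<le> (\<integral>\<^sup>+\<omega>. ennreal (exp (t * D \<omega> - t * a * R \<omega>)) \<partial>M)"
  proof (rule nn_integral_mono)
    fix \<omega> assume "\<omega> \<in> space M"
    show "indicator ?A \<omega> \<le> ennreal (exp (t * D \<omega> - t * a * R \<omega>))"
    proof (cases "\<omega> \<in> ?A")
      case True
      hence "t * (D \<omega> - a * R \<omega>) \<ge> 0" using tail_pos[OF a ta] by auto
      hence "1 \<le> exp (t * D \<omega> - t * a * R \<omega>)" by (simp add: algebra_simps)
      then show ?thesis using True by simp
    qed simp
  qed
  also have "\<dots> = ennreal (integral\<^sup>L M (\<lambda>\<omega>. exp (- v * R \<omega>)))"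
    using H exp_int_pos(4)[OF _ R0 v] by simp
  finally show ?thesis
    by (simp add: emeasure_eq_measure ennreal_le_iff)
qed

lemma young_pt:
  fixes q u :: real assumes q: "q > 1"
  shows "1 \<le> (q - 1) / q * exp u + exp (- (q - 1) * u) / q"
proof -
  have "(q - 1) * (1 + u) \<le> (q - 1) * exp u" using q exp_ge_add_one_self[of u] by simp
  moreover have "1 + (- (q - 1) * u) \<le> exp (- (q - 1) * u)" by (rule exp_ge_add_one_self)
  ultimately have "q \<le> (q - 1) * exp u + exp (- (q - 1) * u)" by (simp add: algebra_simps)
  thus ?thesis using q by (simp add: field_simps)
qed

lemma (in prob_space) young_tail:
  fixes D R :: "'a \<Rightarrow> real"
  assumes [measurable]: "D \<in> borel_measurable M" "R \<in> borel_measurable M"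
    and R0: "\<And>\<omega>. R \<omega> \<ge> 0" and a: "a \<noteq> 0" and ta: "t * a \<ge> 0" and v: "v \<ge> 0"
    and q: "q > 1" and hv: "v = a * t - l"
    and H: "(\<integral>\<^sup>+\<omega>. ennreal (exp (t * D \<omega> - l * R \<omega>)) \<partial>M) \<le> 1"
  shows "measure M {\<omega>\<in>space M. 0 \<le> a * (D \<omega> - a * R \<omega>)}
     \<le> (integral\<^sup>L M (\<lambda>\<omega>. exp (- ((q - 1) * v) * R \<omega>))) powr (1 / q)"
proof -
  let ?A = "{\<omega>\<in>space M. 0 \<le> a * (D \<omega> - a * R \<omega>)}"
  define U where "U = integral\<^sup>L M (\<lambda>\<omega>. exp (- ((q - 1) * v) * R \<omega>))"
  have w: "(q - 1) * v \<ge> 0" using q v by simp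
  note Ufacts = exp_int_pos[OF _ R0 w]
  have U0: "U > 0" using Ufacts(2) by (simp add: U_def)
  define \<sigma> where "\<sigma> = - ln U / q"
  define \<alpha> where "\<alpha> = (q - 1) / q * exp (- \<sigma>)"
  define \<beta> where "\<beta> = exp ((q - 1) * \<sigma>) / q"
  have \<alpha>0: "\<alpha> \<ge> 0" and \<beta>0: "\<beta> \<ge> 0" using q by (auto simp: \<alpha>_def \<beta>_def)
  have As: "?A \<in> sets M" by measurable
  have "emeasure M ?A = (\<integral>\<^sup>+\<omega>. indicator ?A \<omega> \<partial>M)" using As by simp
  also have "\<dots> \<le> (\<integral>\<^sup>+\<omega>. ennreal \<alpha> * ennreal (exp (t * D \<omega> - l * R \<omega>))
        + ennreal \<beta> * ennreal (exp (- ((q - 1) * v) * R \<omega>)) \<partial>M)"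
  proof (rule nn_integral_mono)
    fix \<omega> assume "\<omega> \<in> space M"
    show "indicator ?A \<omega> \<le> ennreal \<alpha> * ennreal (exp (t * D \<omega> - l * R \<omega>))
        + ennreal \<beta> * ennreal (exp (- ((q - 1) * v) * R \<omega>))"
    proof (cases "\<omega> \<in> ?A")
      case True
      hence "t * (D \<omega> - a * R \<omega>) \<ge> 0" using tail_pos[OF a ta] by auto
      hence ge: "t * D \<omega> - l * R \<omega> \<ge> v * R \<omega> - \<sigma> + \<sigma>" by (simp add: hv algebra_simps)
      define u where "u = v * R \<omega> - \<sigma>"
      have "1 \<le> (q - 1) / q * exp u + exp (- (q - 1) * u) / q" by (rule young_pt[OF q])
      also have "(q - 1) / q * exp u = \<alpha> * exp (v * R \<omega>)"
        by (simp add: \<alpha>_def u_def exp_diff field_simps exp_minus)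
      also have "exp (- (q - 1) * u) / q = \<beta> * exp (- ((q - 1) * v) * R \<omega>)"
        by (simp add: \<beta>_def u_def exp_add[symmetric] algebra_simps)
      also have "\<alpha> * exp (v * R \<omega>) \<le> \<alpha> * exp (t * D \<omega> - l * R \<omega>)"
        using ge \<alpha>0 by (intro mult_left_mono) auto
      finally have "1 \<le> \<alpha> * exp (t * D \<omega> - l * R \<omega>) + \<beta> * exp (- ((q - 1) * v) * R \<omega>)" by simp
      hence "ennreal 1 \<le> ennreal (\<alpha> * exp (t * D \<omega> - l * R \<omega>) + \<beta> * exp (- ((q - 1) * v) * R \<omega>))"
        by (rule ennreal_leI)
      then show ?thesis using True \<alpha>0 \<beta>0
        by (simp add: ennreal_plus[symmetric] ennreal_mult[symmetric] del: ennreal_plus)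
    qed simp
  qed
  also have "\<dots> = ennreal \<alpha> * (\<integral>\<^sup>+\<omega>. ennreal (exp (t * D \<omega> - l * R \<omega>)) \<partial>M)
      + ennreal \<beta> * (\<integral>\<^sup>+\<omega>. ennreal (exp (- ((q - 1) * v) * R \<omega>)) \<partial>M)"
    by (subst nn_integral_add) (auto simp: nn_integral_cmult)
  also have "\<dots> \<le> ennreal \<alpha> * 1 + ennreal \<beta> * ennreal U"
    using H Ufacts(4) unfolding U_def by (intro add_mono mult_left_mono) auto
  also have "\<dots> = ennreal (\<alpha> + \<beta> * U)"
    using \<alpha>0 \<beta>0 U0 by (simp add: ennreal_plus[symmetric] ennreal_mult[symmetric] del: ennreal_plus)
  finally have E: "emeasure M ?A \<le> ennreal (\<alpha> + \<beta> * U)" .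
  have nn: "0 \<le> \<alpha> + \<beta> * U" using \<alpha>0 \<beta>0 U0 by simp
  have "measure M ?A \<le> \<alpha> + \<beta> * U"
    using E by (simp add: emeasure_eq_measure ennreal_le_iff[OF nn] del: ennreal_plus)
  also have "\<alpha> + \<beta> * U = U powr (1 / q)"
  proof -
    have "exp (- \<sigma>) = U powr (1 / q)" using U0 by (simp add: \<sigma>_def powr_def)
    moreover have "exp ((q - 1) * \<sigma>) * U = U powr (1 / q)"
    proof -
      have e: "(q - 1) * \<sigma> + ln U = ln U / q" using q by (simp add: \<sigma>_def field_simps)
      have "exp ((q - 1) * \<sigma>) * U = exp ((q - 1) * \<sigma> + ln U)" using U0 by (simp add: exp_add)
      also have "\<dots> = U powr (1 / q)" using U0 by (simp add: e powr_def)
      finally show ?thesis .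
    qed
    ultimately show ?thesis using q by (simp add: \<alpha>_def \<beta>_def field_simps)
  qed
  finally show ?thesis unfolding U_def .
qed

lemma sup_limit:
  fixes f G :: "real \<Rightarrow> real" and S :: "real set" and P :: real
  assumes z: "z \<in> S" "f z = 0" and bdd: "bdd_above (f ` S)"
    and bound: "\<And>t. t \<in> S \<Longrightarrow> f t \<ge> 0 \<Longrightarrow> P \<le> G (f t)"
    and cont: "\<And>w. (\<And>k. w k \<ge> 0) \<Longrightarrow> w \<longlonglongrightarrow> (SUP t\<in>S. f t) \<Longrightarrow> (\<lambda>k. G (w k)) \<longlonglongrightarrow> G (SUP t\<in>S. f t)"
  shows "P \<le> G (SUP t\<in>S. f t)"
proof -
  define I where "I = (SUP t\<in>S. f t)"
  have ne: "S \<noteq> {}" using z by auto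
  have up: "f t \<le> I" if "t \<in> S" for t unfolding I_def by (rule cSUP_upper[OF that bdd])
  have I0: "0 \<le> I" using up[OF z(1)] z(2) by simp
  have "\<forall>k. \<exists>t. t \<in> S \<and> I - inverse (real (Suc k)) < f t"
  proof
    fix k
    have "I - inverse (real (Suc k)) < I" by simp
    then show "\<exists>t. t \<in> S \<and> I - inverse (real (Suc k)) < f t"
      unfolding I_def using less_cSUP_iff[OF ne bdd] by (simp add: I_def) blast
  qed
  then obtain T where T: "\<And>k. T k \<in> S" "\<And>k. I - inverse (real (Suc k)) < f (T k)" by metis
  define w where "w k = max (f (T k)) 0" for k
  have w0: "w k \<ge> 0" for k by (simp add: w_def)
  have Pw: "P \<le> G (w k)" for k
  proof (cases "f (T k) \<ge> 0")
    case True then show ?thesis using bound[OF T(1)] by (simp add: w_def)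
  next
    case False then show ?thesis using bound[OF z(1)] z(2) by (simp add: w_def)
  qed
  have lim: "w \<longlonglongrightarrow> I"
  proof (rule tendsto_sandwich[where f="\<lambda>k. I - inverse (real (Suc k))" and h="\<lambda>k. I"])
    show "\<forall>\<^sub>F k in sequentially. I - inverse (real (Suc k)) \<le> w k"
      using T(2) by (intro always_eventually allI) (smt (verit) w_def)
    show "\<forall>\<^sub>F k in sequentially. w k \<le> I"
      using up[OF T(1)] I0 by (intro always_eventually allI) (simp add: w_def)
    show "(\<lambda>k. I - inverse (real (Suc k))) \<longlonglongrightarrow> I"
      using tendsto_diff[OF tendsto_const[of I] LIMSEQ_inverse_real_of_nat] by simp
  qed simp
  have "(\<lambda>k. G (w k)) \<longlonglongrightarrow> G I" using cont[OF w0] lim by (simp add: I_def)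
  then show ?thesis unfolding I_def[symmetric] by (rule LIMSEQ_le_const) (use Pw in auto)
qed

lemma (in prob_space) exp_int_lim:
  fixes R :: "'a \<Rightarrow> real"
  assumes [measurable]: "R \<in> borel_measurable M" and R0: "\<And>\<omega>. R \<omega> \<ge> 0"
    and w0: "\<And>k. w k \<ge> 0" and lim: "w \<longlonglongrightarrow> I"
  shows "(\<lambda>k. integral\<^sup>L M (\<lambda>\<omega>. exp (- w k * R \<omega>))) \<longlonglongrightarrow> integral\<^sup>L M (\<lambda>\<omega>. exp (- I * R \<omega>))"
proof (rule integral_dominated_convergence[where w="\<lambda>_. 1"])
  show "AE x in M. (\<lambda>i. exp (- w i * R x)) \<longlonglongrightarrow> exp (- I * R x)"
    by (intro AE_I2 tendsto_intros lim)
  show "AE x in M. norm (exp (- w i * R x)) \<le> 1" for i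
    using w0[of i] R0 by (intro AE_I2) (simp add: mult_nonneg_nonneg)
qed auto

lemma ratio_ev:
  fixes N R m x :: real
  assumes R: "R > 0" and x: "x > 0" and h: "x \<le> \<bar>N / R - m\<bar>"
  shows "0 \<le> x * ((N - m * R) - x * R) \<or> 0 \<le> - x * ((N - m * R) - - x * R)"
proof -
  have "N / R - m = (N - m * R) / R" using R by (simp add: field_simps)
  hence "x \<le> \<bar>N - m * R\<bar> / R" using h R by simp
  hence "x * R \<le> \<bar>N - m * R\<bar>" using R by (simp add: pos_le_divide_eq)
  hence "(N - m * R) - x * R \<ge> 0 \<or> - ((N - m * R) - - x * R) \<ge> 0" by linarith
  thus ?thesis
  proof
    assume h1: "(N - m * R) - x * R \<ge> 0"
    have "0 \<le> x * ((N - m * R) - x * R)" using x h1 by (intro mult_nonneg_nonneg) auto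
    thus ?thesis ..
  next
    assume h2: "- ((N - m * R) - - x * R) \<ge> 0"
    have "0 \<le> x * (- ((N - m * R) - - x * R))" using x h2 by (intro mult_nonneg_nonneg) auto
    hence "0 \<le> - x * ((N - m * R) - - x * R)" by (simp only: mult_minus_left mult_minus_right)
    thus ?thesis ..
  qed
qed

lemma (in prob_space) exp_int_mono:
  fixes R :: "'a \<Rightarrow> real"
  assumes [measurable]: "R \<in> borel_measurable M" and R0: "\<And>\<omega>. R \<omega> \<ge> 0"
    and w: "0 \<le> w1" "w1 \<le> w2"
  shows "integral\<^sup>L M (\<lambda>\<omega>. exp (- w2 * R \<omega>)) \<le> integral\<^sup>L M (\<lambda>\<omega>. exp (- w1 * R \<omega>))"
proof (rule integral_mono)
  show "integrable M (\<lambda>\<omega>. exp (- w2 * R \<omega>))" using exp_int_pos(1)[OF _ R0] w by simp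
  show "integrable M (\<lambda>\<omega>. exp (- w1 * R \<omega>))" using exp_int_pos(1)[OF _ R0] w by simp
  fix \<omega> show "exp (- w2 * R \<omega>) \<le> exp (- w1 * R \<omega>)"
    using mult_right_mono[OF w(2) R0[of \<omega>]] by simp
qed

theorem corollary5p3:
  fixes M :: "'a measure" and Y :: "nat \<Rightarrow> nat \<Rightarrow> 'a \<Rightarrow> nat"
    and m c x :: real and n :: nat
  assumes "prob_space M"
    and indep: "prob_space.indep_vars M (\<lambda>_. count_space UNIV) (\<lambda>(i, k). Y i k)
                  {(i, k). 1 \<le> i \<and> 1 \<le> k}"
    and ident: "\<And>i k. 1 \<le> i \<Longrightarrow> 1 \<le> k \<Longrightarrow>
                  distr M (count_space UNIV) (Y i k) = distr M (count_space UNIV) (Y 1 1)"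
    and mean_int: "integrable M (\<lambda>\<omega>. real (Y 1 1 \<omega>))"
    and m_def: "m = integral\<^sup>L M (\<lambda>\<omega>. real (Y 1 1 \<omega>))"
    and m_gt: "m > 1"
    and var_fin: "integrable M (\<lambda>\<omega>. (real (Y 1 1 \<omega>))\<^sup>2)"
    and nonext: "AE \<omega> in M. \<forall>j. gw_X Y j \<omega> \<noteq> 0"
    and c_pos: "c > 0"
    and mgf_fin: "\<And>t. t \<in> {-c..c} \<Longrightarrow> integrable M (\<lambda>\<omega>. exp (t * (real (Y 1 1 \<omega>) - m)))"
    and n_pos: "n \<ge> 1"
    and x_pos: "x > 0"
  shows
    "measure M {\<omega> \<in> space M. \<bar>real (gw_X Y n \<omega>) / real (gw_X Y (n - 1) \<omega>) - m\<bar> \<ge> x}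
       \<le> 2 * integral\<^sup>L M (\<lambda>\<omega>. exp (- gw_J M Y m c x * real (gw_X Y (n - 1) \<omega>)))
     \<and> measure M {\<omega> \<in> space M. \<bar>real (gw_X Y n \<omega>) / real (gw_X Y (n - 1) \<omega>) - m\<bar> \<ge> x}
       \<le> 2 * (INF p\<in>{1<..}. (integral\<^sup>L M
              (\<lambda>\<omega>. exp (- (p - 1) * gw_J M Y m c x * real (gw_X Y (n - 1) \<omega>)))) powr (1 / p))
     \<and> measure M {\<omega> \<in> space M.
          \<bar>real (\<Sum>k = 1..n. gw_X Y k \<omega>) / real (\<Sum>k = 1..n. gw_X Y (k - 1) \<omega>) - m\<bar> \<ge> x}
       \<le> 2 * (INF p\<in>{1<..}. (integral\<^sup>L M
              (\<lambda>\<omega>. exp (- (p - 1) * gw_J M Y m c x * real (\<Sum>k = 0..n - 1. gw_X Y k \<omega>)))) powr (1 / p))"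
  
proof -
  interpret gw M Y m c
    by (intro gw.intro gw_axioms.intro assms)
  define Ia where "Ia a = gw_I M Y m c a" for a
  define f where "f a t = a * t - L t" for a t
  define J where "J = gw_J M Y m c x"
  have Iaf: "Ia a = (SUP t\<in>{-c..c}. f a t)" for a by (simp add: Ia_def gw_I_def f_def)
  have bddf: "bdd_above (f a ` {-c..c})" for a
  proof (rule bdd_aboveI2)
    fix t assume t: "t \<in> {-c..c}"
    have "a * t \<le> \<bar>a\<bar> * \<bar>t\<bar>" by (simp add: abs_mult[symmetric])
    also have "\<dots> \<le> \<bar>a\<bar> * c" using t by (intro mult_left_mono) auto
    finally show "f a t \<le> \<bar>a\<bar> * c" using L_nonneg[OF t] by (simp add: f_def)
  qed
  have c0: "0 \<in> {-c..c}" using c_pos by simp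
  have f0: "f a 0 = 0" for a by (simp add: f_def L0)
  have Ia0: "Ia a \<ge> 0" for a using cSUP_upper[OF c0 bddf[of a]] f0[of a] by (simp add: Iaf)
  have J_le: "J \<le> Ia x" "J \<le> Ia (- x)" and J0: "J \<ge> 0"
    using Ia0[of x] Ia0[of "-x"] by (auto simp: J_def gw_J_def Ia_def)
  have ta: "t * a \<ge> 0" if "t \<in> {-c..c}" "f a t \<ge> 0" for t a
    using that L_nonneg[OF that(1)] by (auto simp: f_def mult.commute)
  define R1 where "R1 \<omega> = real (gw_X Y (n-1) \<omega>)" for \<omega>
  define D1 where "D1 \<omega> = real (gw_X Y n \<omega>) - m * real (gw_X Y (n-1) \<omega>)" for \<omega>
  define R2 where "R2 \<omega> = (\<Sum>k=1..n. real (gw_X Y (k-1) \<omega>))" for \<omega>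
  define D2 where "D2 \<omega> = (\<Sum>k=1..n. real (gw_X Y k \<omega>) - m * real (gw_X Y (k-1) \<omega>))" for \<omega>
  have R1m[measurable]: "R1 \<in> borel_measurable M" unfolding R1_def[abs_def] by measurable
  have D1m[measurable]: "D1 \<in> borel_measurable M" unfolding D1_def[abs_def] by measurable
  have R2m[measurable]: "R2 \<in> borel_measurable M" unfolding R2_def[abs_def] by measurable
  have D2m[measurable]: "D2 \<in> borel_measurable M" unfolding D2_def[abs_def] by measurable
  have R10: "R1 \<omega> \<ge> 0" and R20: "R2 \<omega> \<ge> 0" for \<omega> by (auto simp: R1_def R2_def intro: sum_nonneg)
  define A1 where "A1 a = {\<omega>\<in>space M. 0 \<le> a * (D1 \<omega> - a * R1 \<omega>)}" for a
  define A2 where "A2 a = {\<omega>\<in>space M. 0 \<le> a * (D2 \<omega> - a * R2 \<omega>)}" for a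
  have [measurable]: "A1 a \<in> sets M" "A2 a \<in> sets M" for a unfolding A1_def A2_def by measurable

  have H1: "(\<integral>\<^sup>+\<omega>. ennreal (exp (t * D1 \<omega> - l * R1 \<omega>)) \<partial>M)
      = (\<integral>\<^sup>+\<omega>. ennreal (exp (- (l - L t) * R1 \<omega>)) \<partial>M)" if t: "t \<in> {-c..c}" for t l
  proof -
    have "(\<integral>\<^sup>+\<omega>. ennreal (exp (t * D1 \<omega> - l * R1 \<omega>)) \<partial>M)
       = (\<integral>\<^sup>+\<omega>. ennreal (exp ((L t - l) * real (gw_X Y (n-1) \<omega>))) \<partial>M)"
      using consA[OF n_pos t, of l] by (simp add: D1_def R1_def)
    also have "\<dots> = (\<integral>\<^sup>+\<omega>. ennreal (exp (- (l - L t) * R1 \<omega>)) \<partial>M)"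
      by (simp add: R1_def algebra_simps)
    finally show ?thesis .
  qed
  have H2: "(\<integral>\<^sup>+\<omega>. ennreal (exp (t * D2 \<omega> - L t * R2 \<omega>)) \<partial>M) = 1" if t: "t \<in> {-c..c}" for t
    using Zf_one[OF t, of n] by (simp add: Zf_def D2_def R2_def)

  have mk1: "measure M (A1 a) \<le> integral\<^sup>L M (\<lambda>\<omega>. exp (- Ia a * R1 \<omega>))" if a: "a \<noteq> 0" for a
    unfolding Iaf
  proof (rule sup_limit[OF c0 f0 bddf])
    fix t assume t: "t \<in> {-c..c}" and ft: "f a t \<ge> 0"
    show "measure M (A1 a) \<le> integral\<^sup>L M (\<lambda>\<omega>. exp (- f a t * R1 \<omega>))"
      unfolding A1_def
    proof (rule markov_tail[OF D1m R1m R10 a ta[OF t ft] ft])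
      show "(\<integral>\<^sup>+\<omega>. ennreal (exp (t * D1 \<omega> - t * a * R1 \<omega>)) \<partial>M) = (\<integral>\<^sup>+\<omega>. ennreal (exp (- f a t * R1 \<omega>)) \<partial>M)"
        using H1[OF t, of "t * a"] by (simp add: f_def algebra_simps)
    qed
  next
    fix w :: "nat \<Rightarrow> real" assume "\<And>k. w k \<ge> 0" "w \<longlonglongrightarrow> (SUP t\<in>{-c..c}. f a t)"
    then show "(\<lambda>k. integral\<^sup>L M (\<lambda>\<omega>. exp (- w k * R1 \<omega>))) \<longlonglongrightarrow> integral\<^sup>L M (\<lambda>\<omega>. exp (- (SUP t\<in>{-c..c}. f a t) * R1 \<omega>))"
      by (intro exp_int_lim[OF R1m R10]) auto
  qed

  have mk2: "measure M (A1 a) \<le> (integral\<^sup>L M (\<lambda>\<omega>. exp (- ((p - 1) * Ia a) * R1 \<omega>))) powr (1 / p)"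
    if a: "a \<noteq> 0" and p: "p > 1" for a p
    unfolding Iaf
  proof (rule sup_limit[OF c0 f0 bddf])
    fix t assume t: "t \<in> {-c..c}" and ft: "f a t \<ge> 0"
    show "measure M (A1 a) \<le> (integral\<^sup>L M (\<lambda>\<omega>. exp (- ((p - 1) * f a t) * R1 \<omega>))) powr (1 / p)"
      unfolding A1_def
    proof (rule young_tail[OF D1m R1m R10 a ta[OF t ft] ft p])
      show "f a t = a * t - L t" by (simp add: f_def)
      show "(\<integral>\<^sup>+\<omega>. ennreal (exp (t * D1 \<omega> - L t * R1 \<omega>)) \<partial>M) \<le> 1"
        using H1[OF t, of "L t"] by (simp add: emeasure_space_1)
    qed
  next
    fix w :: "nat \<Rightarrow> real" assume w: "\<And>k. w k \<ge> 0" "w \<longlonglongrightarrow> (SUP t\<in>{-c..c}. f a t)"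
    have "(\<lambda>k. integral\<^sup>L M (\<lambda>\<omega>. exp (- ((p - 1) * w k) * R1 \<omega>))) \<longlonglongrightarrow> integral\<^sup>L M (\<lambda>\<omega>. exp (- ((p - 1) * (SUP t\<in>{-c..c}. f a t)) * R1 \<omega>))"
      using w p by (intro exp_int_lim[OF R1m R10] tendsto_intros) auto
    moreover have "integral\<^sup>L M (\<lambda>\<omega>. exp (- ((p - 1) * (SUP t\<in>{-c..c}. f a t)) * R1 \<omega>)) \<noteq> 0"
      using exp_int_pos(2)[OF R1m R10, where w="(p - 1) * Ia a"] Ia0[of a] p by (simp add: Iaf)
    ultimately show "(\<lambda>k. (integral\<^sup>L M (\<lambda>\<omega>. exp (- ((p - 1) * w k) * R1 \<omega>))) powr (1 / p)) \<longlonglongrightarrow>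
        (integral\<^sup>L M (\<lambda>\<omega>. exp (- ((p - 1) * (SUP t\<in>{-c..c}. f a t)) * R1 \<omega>))) powr (1 / p)"
      by (intro tendsto_powr tendsto_const)
  qed

  have mk3: "measure M (A2 a) \<le> (integral\<^sup>L M (\<lambda>\<omega>. exp (- ((p - 1) * Ia a) * R2 \<omega>))) powr (1 / p)"
    if a: "a \<noteq> 0" and p: "p > 1" for a p
    unfolding Iaf
  proof (rule sup_limit[OF c0 f0 bddf])
    fix t assume t: "t \<in> {-c..c}" and ft: "f a t \<ge> 0"
    show "measure M (A2 a) \<le> (integral\<^sup>L M (\<lambda>\<omega>. exp (- ((p - 1) * f a t) * R2 \<omega>))) powr (1 / p)"
      unfolding A2_def
    proof (rule young_tail[OF D2m R2m R20 a ta[OF t ft] ft p])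
      show "f a t = a * t - L t" by (simp add: f_def)
      show "(\<integral>\<^sup>+\<omega>. ennreal (exp (t * D2 \<omega> - L t * R2 \<omega>)) \<partial>M) \<le> 1"
        using H2[OF t] by simp
    qed
  next
    fix w :: "nat \<Rightarrow> real" assume w: "\<And>k. w k \<ge> 0" "w \<longlonglongrightarrow> (SUP t\<in>{-c..c}. f a t)"
    have "(\<lambda>k. integral\<^sup>L M (\<lambda>\<omega>. exp (- ((p - 1) * w k) * R2 \<omega>))) \<longlonglongrightarrow> integral\<^sup>L M (\<lambda>\<omega>. exp (- ((p - 1) * (SUP t\<in>{-c..c}. f a t)) * R2 \<omega>))"
      using w p by (intro exp_int_lim[OF R2m R20] tendsto_intros) auto
    moreover have "integral\<^sup>L M (\<lambda>\<omega>. exp (- ((p - 1) * (SUP t\<in>{-c..c}. f a t)) * R2 \<omega>)) \<noteq> 0"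
      using exp_int_pos(2)[OF R2m R20, where w="(p - 1) * Ia a"] Ia0[of a] p by (simp add: Iaf)
    ultimately show "(\<lambda>k. (integral\<^sup>L M (\<lambda>\<omega>. exp (- ((p - 1) * w k) * R2 \<omega>))) powr (1 / p)) \<longlonglongrightarrow>
        (integral\<^sup>L M (\<lambda>\<omega>. exp (- ((p - 1) * (SUP t\<in>{-c..c}. f a t)) * R2 \<omega>))) powr (1 / p)"
      by (intro tendsto_powr tendsto_const)
  qed

  define E1 where "E1 = {\<omega> \<in> space M. \<bar>real (gw_X Y n \<omega>) / real (gw_X Y (n - 1) \<omega>) - m\<bar> \<ge> x}"
  define E2 where "E2 = {\<omega> \<in> space M.
          \<bar>real (\<Sum>k = 1..n. gw_X Y k \<omega>) / real (\<Sum>k = 1..n. gw_X Y (k - 1) \<omega>) - m\<bar> \<ge> x}"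
  have xn0: "x \<noteq> 0" "- x \<noteq> 0" using x_pos by auto
  have E1le: "measure M E1 \<le> measure M (A1 x) + measure M (A1 (- x))"
  proof -
    have "AE \<omega> in M. \<omega> \<in> E1 \<longrightarrow> \<omega> \<in> A1 x \<union> A1 (- x)"
      using nonext
    proof eventually_elim
      case (elim \<omega>)
      show ?case
      proof
        assume e: "\<omega> \<in> E1"
        have "R1 \<omega> > 0" using elim by (simp add: R1_def)
        from ratio_ev[OF this x_pos, of "real (gw_X Y n \<omega>)" m] e
        show "\<omega> \<in> A1 x \<union> A1 (- x)" by (auto simp: E1_def A1_def D1_def R1_def)
      qed
    qed
    hence "measure M E1 \<le> measure M (A1 x \<union> A1 (- x))"
      by (intro finite_measure_mono_AE) auto
    also have "\<dots> \<le> measure M (A1 x) + measure M (A1 (- x))" by (intro measure_Un_le) auto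
    finally show ?thesis .
  qed
  have R2pos: "R2 \<omega> \<ge> 1" for \<omega>
  proof -
    have "real (gw_X Y (1 - 1) \<omega>) \<le> R2 \<omega>" unfolding R2_def
      by (rule member_le_sum[where i=1]) (use n_pos in auto)
    thus ?thesis by simp
  qed
  have E2le: "measure M E2 \<le> measure M (A2 x) + measure M (A2 (- x))"
  proof -
    have "E2 \<subseteq> A2 x \<union> A2 (- x)"
    proof
      fix \<omega> assume e: "\<omega> \<in> E2"
      have R: "R2 \<omega> > 0" using R2pos[of \<omega>] by simp
      have eqN: "real (\<Sum>k = 1..n. gw_X Y k \<omega>) - m * R2 \<omega> = D2 \<omega>"
        by (simp add: D2_def R2_def sum_subtractf sum_distrib_left)
      have eqR: "real (\<Sum>k = 1..n. gw_X Y (k - 1) \<omega>) = R2 \<omega>" by (simp add: R2_def)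
      have sp: "\<omega> \<in> space M" using e by (simp add: E2_def)
      have "x \<le> \<bar>real (\<Sum>k = 1..n. gw_X Y k \<omega>) / R2 \<omega> - m\<bar>"
        using e by (simp only: E2_def mem_Collect_eq eqR)
      from ratio_ev[OF R x_pos this]
      have "0 \<le> x * (D2 \<omega> - x * R2 \<omega>) \<or> 0 \<le> - x * (D2 \<omega> - - x * R2 \<omega>)" unfolding eqN .
      thus "\<omega> \<in> A2 x \<union> A2 (- x)" unfolding A2_def using sp by blast
    qed
    hence "measure M E2 \<le> measure M (A2 x \<union> A2 (- x))"
      by (intro finite_measure_mono) auto
    also have "\<dots> \<le> measure M (A2 x) + measure M (A2 (- x))" by (intro measure_Un_le) auto
    finally show ?thesis .
  qed

  have P1: "measure M E1 \<le> 2 * integral\<^sup>L M (\<lambda>\<omega>. exp (- J * R1 \<omega>))"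
  proof -
    have "measure M (A1 x) \<le> integral\<^sup>L M (\<lambda>\<omega>. exp (- J * R1 \<omega>))"
      using mk1[OF xn0(1)] exp_int_mono[OF R1m R10 J0 J_le(1)] by simp
    moreover have "measure M (A1 (- x)) \<le> integral\<^sup>L M (\<lambda>\<omega>. exp (- J * R1 \<omega>))"
      using mk1[OF xn0(2)] exp_int_mono[OF R1m R10 J0 J_le(2)] by simp
    ultimately show ?thesis using E1le by simp
  qed
  have P2: "measure M E1 \<le> 2 * (integral\<^sup>L M (\<lambda>\<omega>. exp (- (p - 1) * J * R1 \<omega>))) powr (1 / p)"
    if p: "p > 1" for p
  proof -
    have pJ: "0 \<le> (p - 1) * J" using p J0 by simp
    have B: "(integral\<^sup>L M (\<lambda>\<omega>. exp (- ((p - 1) * Ia b) * R1 \<omega>))) powr (1 / p)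
        \<le> (integral\<^sup>L M (\<lambda>\<omega>. exp (- ((p - 1) * J) * R1 \<omega>))) powr (1 / p)" if "J \<le> Ia b" for b
      using p that by (intro powr_mono2 exp_int_mono[OF R1m R10 pJ] integral_nonneg_AE mult_left_mono) auto
    have "measure M E1 \<le> 2 * (integral\<^sup>L M (\<lambda>\<omega>. exp (- ((p - 1) * J) * R1 \<omega>))) powr (1 / p)"
      using E1le mk2[OF xn0(1) p] mk2[OF xn0(2) p] B[OF J_le(1)] B[OF J_le(2)] by simp
    moreover have "(\<lambda>\<omega>. exp (- ((p - 1) * J) * R1 \<omega>)) = (\<lambda>\<omega>. exp (- (p - 1) * J * R1 \<omega>))"
      by (rule ext) (simp only: minus_mult_left mult.assoc)
    ultimately show ?thesis by (simp only:)
  qed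
  have P3: "measure M E2 \<le> 2 * (integral\<^sup>L M (\<lambda>\<omega>. exp (- (p - 1) * J * R2 \<omega>))) powr (1 / p)"
    if p: "p > 1" for p
  proof -
    have pJ: "0 \<le> (p - 1) * J" using p J0 by simp
    have B: "(integral\<^sup>L M (\<lambda>\<omega>. exp (- ((p - 1) * Ia b) * R2 \<omega>))) powr (1 / p)
        \<le> (integral\<^sup>L M (\<lambda>\<omega>. exp (- ((p - 1) * J) * R2 \<omega>))) powr (1 / p)" if "J \<le> Ia b" for b
      using p that by (intro powr_mono2 exp_int_mono[OF R2m R20 pJ] integral_nonneg_AE mult_left_mono) auto
    have "measure M E2 \<le> 2 * (integral\<^sup>L M (\<lambda>\<omega>. exp (- ((p - 1) * J) * R2 \<omega>))) powr (1 / p)"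
      using E2le mk3[OF xn0(1) p] mk3[OF xn0(2) p] B[OF J_le(1)] B[OF J_le(2)] by simp
    moreover have "(\<lambda>\<omega>. exp (- ((p - 1) * J) * R2 \<omega>)) = (\<lambda>\<omega>. exp (- (p - 1) * J * R2 \<omega>))"
      by (rule ext) (simp only: minus_mult_left mult.assoc)
    ultimately show ?thesis by (simp only:)
  qed
  have inf: "P \<le> 2 * (INF p\<in>{1<..}. g p)" if "\<And>p. p > 1 \<Longrightarrow> P \<le> 2 * g p" for P and g :: "real \<Rightarrow> real"
  proof -
    have "P / 2 \<le> (INF p\<in>{1<..}. g p)"
      by (rule cINF_greatest) (use that in \<open>force+\<close>)
    thus ?thesis by simp
  qed
  have R2eq: "real (\<Sum>k = 0..n - 1. gw_X Y k \<omega>) = R2 \<omega>" for \<omega>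
  proof -
    obtain n' where n': "n = Suc n'" using n_pos by (cases n) auto
    show ?thesis unfolding R2_def n' of_nat_sum One_nat_def sum.atLeast_Suc_atMost_Suc_shift
      by (simp del: gw_X.simps)
  qed
  show ?thesis
    using P1 inf[OF P2] inf[OF P3]
    unfolding E1_def E2_def J_def R1_def R2eq by simp
qed

end
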